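(* Let $n\ge 2$, $d_1,\dots,d_n\ge 1$, $L_i\in\mathbb{C}^{d_i\times d_i}$ ($i=1,\dots,n$) and $C_{i,i-1}\in\mathbb{C}^{d_i\times d_{i-1}}$ ($i=2,\dots,n$). Assume: (i) each $L_i$ is invertible and diagonalizable, $L_iV_i=V_i\Lambda_i$ with $V_i$ invertible and $\Lambda_i=\mathrm{diag}(\lambda_{i,1},\dots,\lambda_{i,d_i})$; (ii) $\sigma(L_i)\cap\sigma(L_j)=\emptyset$ for all $i\neq j$; (iii) $\|L_1\|<\|L_2\|<\cdots<\|L_n\|\le 1$. Then for every $i\in\{2,\dots,n\}$, every $x=(x_1,\dots,x_n)$ and every $t\ge 0$, $$\Pi_i\circ\mathsf{Lin}^{\circ t}(x)=\sum_{j=1}^{i}(-1)^{i-j}D_{i,j}L_j^t\,\mathsf{pert}_j(x_1,\dots,x_j).$$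
   Context: Each $\mathbb{C}^{d_i}$ carries a fixed norm and matrices the induced operator norm. $\Pi_i(x_1,\dots,x_n)=x_i$; $\mathsf{Lin}(x_1,\dots,x_n)=(L_1x_1,\;L_2x_2+C_{2,1}x_1,\;\dots,\;L_nx_n+C_{n,n-1}x_{n-1})$ and $\mathsf{Lin}^{\circ t}$ is its $t$-fold iterate. Matrices $D_{i,j}\in\mathbb{C}^{d_i\times d_j}$ ($1\le j\le i\le n$) are defined recursively in $i$: $D_{i,i}=I_{d_i}$; for $i\ge 2$ and $1\le j\le i-1$, $\tilde C_{i,j}\in\mathbb{C}^{d_i\times d_j}$ has entries $[\tilde C_{i,j}]_{\ell,m}=[V_i^{-1}C_{i,i-1}D_{i-1,j}V_j]_{\ell,m}(1-\lambda_{j,m}/\lambda_{i,\ell})^{-1}$ and $D_{i,j}=L_i^{-1}V_i\tilde C_{i,j}V_j^{-1}$. The maps $\mathsf{pert}_i:\mathbb{C}^{d_1}\times\cdots\times\mathbb{C}^{d_i}\to\mathbb{C}^{d_i}$ are $\mathsf{pert}_1(x_1)=x_1$ and $\mathsf{pert}_i(x_1,\dots,x_i)=x_i+\sum_{j=1}^{i-1}(-1)^{i-1-j}D_{i,j}\mathsf{pert}_j(x_1,\dots,x_j)$ for $i\ge 2$. *)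

theory Defs
  imports "Jordan_Normal_Form.Spectral_Radius" "Jordan_Normal_Form.Gauss_Jordan_Elimination"
begin

text \<open>Blocks are indexed by i = 1..n (natural numbers); matrix/vector entries are 0-indexed,
  so the eigenvalue lambda_{i,l} of the paper (l = 1..d_i) is lam i (l-1).
  C i stands for C_{i,i-1}.\<close>

definition minv :: "complex mat \<Rightarrow> complex mat" where
  "minv A = the (mat_inverse A)"

definition Lam :: "(nat \<Rightarrow> nat) \<Rightarrow> (nat \<Rightarrow> nat \<Rightarrow> complex) \<Rightarrow> nat \<Rightarrow> complex mat" where
  "Lam d lam i = mat (d i) (d i) (\<lambda>(l, m). if l = m then lam i l else 0)"

definition is_norm_on :: "nat \<Rightarrow> (complex vec \<Rightarrow> real) \<Rightarrow> bool" where
  "is_norm_on d N \<longleftrightarrow>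
     (\<forall>x \<in> carrier_vec d. N x \<ge> 0 \<and> (N x = 0 \<longleftrightarrow> x = 0\<^sub>v d)) \<and>
     (\<forall>x \<in> carrier_vec d. \<forall>a. N (a \<cdot>\<^sub>v x) = cmod a * N x) \<and>
     (\<forall>x \<in> carrier_vec d. \<forall>y \<in> carrier_vec d. N (x + y) \<le> N x + N y)"

definition opnorm :: "nat \<Rightarrow> (complex vec \<Rightarrow> real) \<Rightarrow> complex mat \<Rightarrow> real" where
  "opnorm d N A = Sup {N (A *\<^sub>v x) | x. x \<in> carrier_vec d \<and> N x \<le> 1}"

definition Lin :: "nat \<Rightarrow> (nat \<Rightarrow> complex mat) \<Rightarrow> (nat \<Rightarrow> complex mat)
    \<Rightarrow> (nat \<Rightarrow> complex vec) \<Rightarrow> (nat \<Rightarrow> complex vec)" where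
  "Lin n L C x = (\<lambda>i. if i = 1 then L 1 *\<^sub>v x 1
                      else if 2 \<le> i \<and> i \<le> n then L i *\<^sub>v x i + C i *\<^sub>v x (i - 1)
                      else x i)"

definition Proj :: "nat \<Rightarrow> (nat \<Rightarrow> complex vec) \<Rightarrow> complex vec" where
  "Proj i x = x i"

fun Dmat :: "(nat \<Rightarrow> nat) \<Rightarrow> (nat \<Rightarrow> complex mat) \<Rightarrow> (nat \<Rightarrow> complex mat) \<Rightarrow> (nat \<Rightarrow> complex mat)
    \<Rightarrow> (nat \<Rightarrow> nat \<Rightarrow> complex) \<Rightarrow> nat \<Rightarrow> nat \<Rightarrow> complex mat" where
  "Dmat d L C V lam 0 j = 0\<^sub>m (d 0) (d j)"
| "Dmat d L C V lam (Suc k) j =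
     (let i = Suc k in
      if j = i then 1\<^sub>m (d i)
      else let M = minv (V i) * C i * Dmat d L C V lam k j * V j;
               Ct = mat (d i) (d j) (\<lambda>(l, m). M $$ (l, m) * inverse (1 - lam j m / lam i l))
           in minv (L i) * V i * Ct * minv (V j))"

definition vsum :: "nat \<Rightarrow> (nat \<Rightarrow> complex vec) \<Rightarrow> nat list \<Rightarrow> complex vec" where
  "vsum dm f js = foldr (+) (map f js) (0\<^sub>v dm)"

lemma vsum_cong [fundef_cong]:
  "dm = dm' \<Longrightarrow> js = js' \<Longrightarrow> (\<And>j. j \<in> set js' \<Longrightarrow> f j = g j) \<Longrightarrow> vsum dm f js = vsum dm' g js'"
  unfolding vsum_def by (metis map_cong)

function pert :: "(nat \<Rightarrow> nat) \<Rightarrow> (nat \<Rightarrow> complex mat) \<Rightarrow> (nat \<Rightarrow> complex mat) \<Rightarrow> (nat \<Rightarrow> complex mat)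
    \<Rightarrow> (nat \<Rightarrow> nat \<Rightarrow> complex) \<Rightarrow> nat \<Rightarrow> (nat \<Rightarrow> complex vec) \<Rightarrow> complex vec" where
  "pert d L C V lam i x =
     (if i \<le> 1 then x i
      else x i + vsum (d i) (\<lambda>j. ((-1) ^ (i - 1 - j)) \<cdot>\<^sub>v (Dmat d L C V lam i j *\<^sub>v pert d L C V lam j x)) [1..<i])"
  by pat_completeness auto
termination
  by (relation "measure (\<lambda>(d, L, C, V, lam, i, x). i)") auto

end

theory Submission imports Defs begin

declare pert.simps[simp del]

lemma minv_props:
  fixes A :: "complex mat"
  assumes A: "A \<in> carrier_mat k k" and inv: "invertible_mat A"
  shows "minv A \<in> carrier_mat k k" "A * minv A = 1\<^sub>m k" "minv A * A = 1\<^sub>m k"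
proof -
  obtain B where AB: "A * B = 1\<^sub>m (dim_row A)" "B * A = 1\<^sub>m (dim_row B)"
    using inv unfolding invertible_mat_def inverts_mat_def by blast
  have Bc: "B \<in> carrier_mat k k"
  proof -
    have "dim_col B = k" using AB(1) A by (metis carrier_matD(1) index_mult_mat(3) index_one_mat(3))
    moreover have "dim_row B = k" using AB(2) A
      by (metis carrier_matD(2) index_mult_mat(3) index_one_mat(3))
    ultimately show ?thesis by auto
  qed
  have U: "A \<in> Units (ring_mat TYPE(complex) k ())"
    unfolding Units_def using A Bc AB by (auto simp: ring_mat_simps)
  have "mat_inverse A \<noteq> None" using mat_inverse(1)[OF A, where b="()"] U by auto
  then obtain B' where "mat_inverse A = Some B'" by auto
  then have "A * B' = 1\<^sub>m k \<and> B' * A = 1\<^sub>m k \<and> B' \<in> carrier_mat k k" using mat_inverse(2)[OF A] by blast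
  moreover have "minv A = B'" unfolding minv_def using \<open>mat_inverse A = Some B'\<close> by simp
  ultimately show "minv A \<in> carrier_mat k k" "A * minv A = 1\<^sub>m k" "minv A * A = 1\<^sub>m k" by auto
qed


lemma vsum_Nil[simp]: "vsum dm f [] = 0\<^sub>v dm" unfolding vsum_def by simp
lemma vsum_Cons[simp]: "vsum dm f (j # js) = f j + vsum dm f js" unfolding vsum_def by simp

lemma vsum_carrier: "(\<And>j. j \<in> set js \<Longrightarrow> f j \<in> carrier_vec dm) \<Longrightarrow> vsum dm f js \<in> carrier_vec dm"
  by (induct js) auto

lemma vsum_snoc:
  assumes "\<And>j. j \<in> set (js @ [k]) \<Longrightarrow> f j \<in> carrier_vec dm"
  shows "vsum dm f (js @ [k]) = vsum dm f js + f k"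
  using assms
proof (induct js)
  case Nil then show ?case by auto
next
  case (Cons a js)
  have c: "f a \<in> carrier_vec dm" "vsum dm f js \<in> carrier_vec dm" "f k \<in> carrier_vec dm"
    using Cons.prems by (auto intro!: vsum_carrier)
  have "vsum dm f ((a # js) @ [k]) = f a + (vsum dm f js + f k)" using Cons by auto
  also have "\<dots> = vsum dm f (a # js) + f k" using c by (simp add: assoc_add_vec)
  finally show ?case .
qed

lemma add4_vec: "(a :: complex vec) \<in> carrier_vec k \<Longrightarrow> b \<in> carrier_vec k \<Longrightarrow> c \<in> carrier_vec k \<Longrightarrow> e \<in> carrier_vec k
  \<Longrightarrow> a + b + (c + e) = (a + c) + (b + e)"
  by (intro eq_vecI) (auto simp: ac_simps)

lemma vsum_add:
  assumes "\<And>j. j \<in> set js \<Longrightarrow> f j \<in> carrier_vec dm" "\<And>j. j \<in> set js \<Longrightarrow> g j \<in> carrier_vec dm"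
  shows "vsum dm f js + vsum dm g js = vsum dm (\<lambda>j. f j + g j) js"
  using assms
proof (induct js)
  case Nil then show ?case by auto
next
  case (Cons a js)
  have c: "f a \<in> carrier_vec dm" "vsum dm f js \<in> carrier_vec dm" "g a \<in> carrier_vec dm" "vsum dm g js \<in> carrier_vec dm"
    using Cons.prems by (auto intro!: vsum_carrier)
  have "vsum dm f (a # js) + vsum dm g (a # js) = (f a + g a) + (vsum dm f js + vsum dm g js)"
    unfolding vsum_Cons by (rule add4_vec[OF c(1) c(2) c(3) c(4)])
  then show ?case using Cons by auto
qed

lemma vsum_zero: "vsum dm (\<lambda>j. 0\<^sub>v dm) js = 0\<^sub>v dm"
  by (induct js) auto

lemma vsum_mult:
  assumes M: "M \<in> carrier_mat r dm" and "\<And>j. j \<in> set js \<Longrightarrow> f j \<in> carrier_vec dm"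
  shows "M *\<^sub>v vsum dm f js = vsum r (\<lambda>j. M *\<^sub>v f j) js"
  using assms(2)
proof (induct js)
  case Nil then show ?case using M by auto
next
  case (Cons a js)
  have c: "f a \<in> carrier_vec dm" "vsum dm f js \<in> carrier_vec dm"
    using Cons.prems by (auto intro!: vsum_carrier)
  show ?case using Cons c M by (simp add: mult_add_distrib_mat_vec)
qed

lemma Lam_carrier: "Lam d lam i \<in> carrier_mat (d i) (d i)" unfolding Lam_def by auto

lemma Lam_mult_left:
  assumes A: "A \<in> carrier_mat (d i) nc" and l: "l < d i" and m: "m < nc"
  shows "(Lam d lam i * A) $$ (l, m) = lam i l * A $$ (l, m)"
proof -
  have "(Lam d lam i * A) $$ (l, m) = (\<Sum>k = 0..<d i. (if l = k then lam i l else 0) * A $$ (k, m))"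
    using A l m unfolding Lam_def by (auto simp: scalar_prod_def intro!: sum.cong)
  also have "\<dots> = (\<Sum>k = 0..<d i. if l = k then lam i l * A $$ (k, m) else 0)"
    by (rule sum.cong) auto
  also have "\<dots> = lam i l * A $$ (l, m)" using l by simp
  finally show ?thesis .
qed

lemma Lam_mult_right:
  assumes A: "A \<in> carrier_mat nr (d i)" and l: "l < nr" and m: "m < d i"
  shows "(A * Lam d lam i) $$ (l, m) = A $$ (l, m) * lam i m"
proof -
  have "(A * Lam d lam i) $$ (l, m) = (\<Sum>k = 0..<d i. A $$ (l, k) * (if k = m then lam i m else 0))"
    using A l m unfolding Lam_def by (auto simp: scalar_prod_def intro!: sum.cong)
  also have "\<dots> = A $$ (l, m) * lam i m" using m by (simp add: if_distrib cong: if_cong)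
  finally show ?thesis .
qed


lemma mat_vec_zero: "(A :: complex mat) \<in> carrier_mat nr nc \<Longrightarrow> A *\<^sub>v 0\<^sub>v nc = 0\<^sub>v nr"
  by (intro eq_vecI) (auto simp: scalar_prod_def)

lemma pow_mat_comm: "A \<in> carrier_mat k k \<Longrightarrow> A * (A ^\<^sub>m t) = A ^\<^sub>m t * A"
proof (induct t)
  case 0 then show ?case by auto
next
  case (Suc t)
  have "A * (A ^\<^sub>m Suc t) = (A * A ^\<^sub>m t) * A" unfolding pow_mat.simps
    by (rule assoc_mult_mat[symmetric]) (use Suc.prems in auto)
  also have "\<dots> = A ^\<^sub>m Suc t * A" using Suc by simp
  finally show ?case .
qed

lemma assoc': assumes "dim_col A = dim_row B" "dim_col B = dim_row C" shows "(A :: complex mat) * B * C = A * (B * C)"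
proof -
  have "A \<in> carrier_mat (dim_row A) (dim_col A)" by (rule carrier_matI) auto
  moreover have "B \<in> carrier_mat (dim_col A) (dim_col B)" using assms by (intro carrier_matI) auto
  moreover have "C \<in> carrier_mat (dim_col B) (dim_col C)" using assms by (intro carrier_matI) auto
  ultimately show ?thesis by (rule assoc_mult_mat)
qed

lemma assoc_v': assumes "dim_col A = dim_row B" "dim_col B = dim_vec v" shows "((A :: complex mat) * B) *\<^sub>v v = A *\<^sub>v (B *\<^sub>v v)"
proof -
  have "A \<in> carrier_mat (dim_row A) (dim_col A)" by (rule carrier_matI) auto
  moreover have "B \<in> carrier_mat (dim_col A) (dim_col B)" using assms by (intro carrier_matI) auto
  moreover have "v \<in> carrier_vec (dim_col B)" using assms by (intro carrier_vecI) auto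
  ultimately show ?thesis by (rule assoc_mult_mat_vec)
qed

lemma mult_eq_assoc: "A * B = C' * D \<Longrightarrow> dim_col A = dim_row B \<Longrightarrow> dim_col C' = dim_row D \<Longrightarrow> dim_row X = dim_col B
  \<Longrightarrow> (A :: complex mat) * (B * X) = C' * (D * X)"
  by (metis assoc' index_mult_mat(3))

lemma mult_inv_assoc: "A * B = 1\<^sub>m k \<Longrightarrow> dim_col A = dim_row B \<Longrightarrow> dim_row X = dim_col B
  \<Longrightarrow> (A :: complex mat) * (B * X) = X"
  by (metis assoc' index_mult_mat(3) index_one_mat(3) left_mult_one_mat')

lemma scal: "(a::complex) \<noteq> 0 \<Longrightarrow> a \<noteq> b \<Longrightarrow>
  a * (inverse a * (m * inverse (1 - b / a))) = inverse a * (m * inverse (1 - b / a)) * b + m"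
proof -
  assume a: "a \<noteq> 0" and ab: "a \<noteq> b"
  have ab': "a - b \<noteq> 0" using ab by simp
  have "1 - b / a = (a - b) / a" using a by (simp add: field_simps)
  then have e: "inverse (1 - b / a) = a / (a - b)" by simp
  show ?thesis unfolding e using a ab' by (simp add: field_simps)
qed

lemma add3_swap: "(a :: complex vec) \<in> carrier_vec k \<Longrightarrow> b \<in> carrier_vec k \<Longrightarrow> c \<in> carrier_vec k
  \<Longrightarrow> a + b + c = (a + c) + b"
  by (intro eq_vecI) (auto simp: ac_simps)

lemma add_lswap: "(a :: complex vec) \<in> carrier_vec k \<Longrightarrow> b \<in> carrier_vec k \<Longrightarrow> c \<in> carrier_vec k
  \<Longrightarrow> a + (b + c) = b + (a + c)"
  by (intro eq_vecI) (auto simp: ac_simps)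

locale lsys =
  fixes n :: nat and d :: "nat \<Rightarrow> nat"
    and L C V :: "nat \<Rightarrow> complex mat" and lam :: "nat \<Rightarrow> nat \<Rightarrow> complex"
  assumes L_dim: "\<forall>i \<in> {1..n}. L i \<in> carrier_mat (d i) (d i)"
    and C_dim: "\<forall>i \<in> {2..n}. C i \<in> carrier_mat (d i) (d (i - 1))"
    and V_dim: "\<forall>i \<in> {1..n}. V i \<in> carrier_mat (d i) (d i)"
    and L_inv: "\<forall>i \<in> {1..n}. invertible_mat (L i)"
    and V_inv: "\<forall>i \<in> {1..n}. invertible_mat (V i)"
    and diag: "\<forall>i \<in> {1..n}. L i * V i = V i * Lam d lam i"
    and spec: "\<forall>i \<in> {1..n}. \<forall>j \<in> {1..n}. i \<noteq> j \<longrightarrow> spectrum (L i) \<inter> spectrum (L j) = {}"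
begin

lemma Lc: "1 \<le> i \<Longrightarrow> i \<le> n \<Longrightarrow> L i \<in> carrier_mat (d i) (d i)" using L_dim by auto
lemma Vc: "1 \<le> i \<Longrightarrow> i \<le> n \<Longrightarrow> V i \<in> carrier_mat (d i) (d i)" using V_dim by auto
lemma Cc: "2 \<le> i \<Longrightarrow> i \<le> n \<Longrightarrow> C i \<in> carrier_mat (d i) (d (i - 1))" using C_dim by auto
lemma Li: "1 \<le> i \<Longrightarrow> i \<le> n \<Longrightarrow> minv (L i) \<in> carrier_mat (d i) (d i) \<and> L i * minv (L i) = 1\<^sub>m (d i) \<and> minv (L i) * L i = 1\<^sub>m (d i)"
  using minv_props[OF Lc] L_inv by auto
lemma Vi: "1 \<le> i \<Longrightarrow> i \<le> n \<Longrightarrow> minv (V i) \<in> carrier_mat (d i) (d i) \<and> V i * minv (V i) = 1\<^sub>m (d i) \<and> minv (V i) * V i = 1\<^sub>m (d i)"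
  using minv_props[OF Vc] V_inv by auto
lemma diag': "1 \<le> i \<Longrightarrow> i \<le> n \<Longrightarrow> L i * V i = V i * Lam d lam i" using diag by auto

lemma eig:
  assumes i: "1 \<le> i" "i \<le> n" and l: "l < d i"
  shows "eigenvalue (L i) (lam i l)"
proof -
  define e :: "complex vec" where "e = unit_vec (d i) l"
  define v where "v = V i *\<^sub>v e"
  have ec: "e \<in> carrier_vec (d i)" unfolding e_def by simp
  have vc: "v \<in> carrier_vec (d i)" unfolding v_def using Vc[OF i] ec by simp
  have Le: "Lam d lam i *\<^sub>v e = lam i l \<cdot>\<^sub>v e"
  proof (rule eq_vecI)
    fix k assume "k < dim_vec (lam i l \<cdot>\<^sub>v e)"
    then have k: "k < d i" using ec by simp
    have "(Lam d lam i *\<^sub>v e) $ k = (\<Sum>m = 0..<d i. (if k = m then lam i k else 0) * (if m = l then 1 else 0))"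
      using k l unfolding Lam_def e_def by (auto simp: scalar_prod_def unit_vec_def intro!: sum.cong)
    also have "\<dots> = (\<Sum>m = 0..<d i. if m = k then (if k = l then lam i k else 0) else 0)"
      by (rule sum.cong) auto
    also have "\<dots> = (lam i l \<cdot>\<^sub>v e) $ k" using k l unfolding e_def by (auto simp: unit_vec_def)
    finally show "(Lam d lam i *\<^sub>v e) $ k = (lam i l \<cdot>\<^sub>v e) $ k" .
  qed (use ec in \<open>auto simp: Lam_def\<close>)
  have "L i *\<^sub>v v = (L i * V i) *\<^sub>v e" unfolding v_def using Lc[OF i] Vc[OF i] ec by simp
  also have "\<dots> = (V i * Lam d lam i) *\<^sub>v e" using diag'[OF i] by simp
  also have "\<dots> = V i *\<^sub>v (lam i l \<cdot>\<^sub>v e)" by (simp add: assoc_mult_mat_vec[OF Vc[OF i] Lam_carrier[of d lam i] ec] Le)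
  also have "\<dots> = lam i l \<cdot>\<^sub>v v" unfolding v_def using Vc[OF i] ec by (simp add: mult_mat_vec)
  finally have ev: "L i *\<^sub>v v = lam i l \<cdot>\<^sub>v v" .
  have "v \<noteq> 0\<^sub>v (d i)"
  proof
    assume v0: "v = 0\<^sub>v (d i)"
    have "minv (V i) *\<^sub>v v = (minv (V i) * V i) *\<^sub>v e" unfolding v_def using assoc_mult_mat_vec[OF Vi[OF i, THEN conjunct1] Vc[OF i] ec] by simp
    also have "\<dots> = e" using Vi[OF i] ec by simp
    finally have "e = 0\<^sub>v (d i)" using v0 mat_vec_zero[OF Vi[OF i, THEN conjunct1]] by simp
    then have "e $ l = 0" using l by simp
    then show False unfolding e_def using l by simp
  qed
  then show ?thesis unfolding eigenvalue_def eigenvector_def using vc ev Lc[OF i] by auto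
qed

lemma lam_nz:
  assumes i: "1 \<le> i" "i \<le> n" and l: "l < d i"
  shows "lam i l \<noteq> 0"
proof
  assume "lam i l = 0"
  then obtain v where v: "v \<in> carrier_vec (d i)" "v \<noteq> 0\<^sub>v (d i)" "L i *\<^sub>v v = 0 \<cdot>\<^sub>v v"
    using eig[OF i l] Lc[OF i] unfolding eigenvalue_def eigenvector_def by auto
  have z: "L i *\<^sub>v v = 0\<^sub>v (d i)" using v(1,3) by (intro eq_vecI) auto
  have "v = (minv (L i) * L i) *\<^sub>v v" using Li[OF i] v by simp
  also have "\<dots> = minv (L i) *\<^sub>v (L i *\<^sub>v v)" using assoc_mult_mat_vec[OF Li[OF i, THEN conjunct1] Lc[OF i] v(1)] by simp
  also have "\<dots> = 0\<^sub>v (d i)" using z mat_vec_zero[OF Li[OF i, THEN conjunct1]] by simp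
  finally show False using v by simp
qed

lemma lam_ne:
  assumes i: "1 \<le> i" "i \<le> n" and l: "l < d i" and j: "1 \<le> j" "j \<le> n" and m: "m < d j" and ij: "i \<noteq> j"
  shows "lam i l \<noteq> lam j m"
proof
  assume eq: "lam i l = lam j m"
  have "lam i l \<in> spectrum (L i) \<inter> spectrum (L j)"
    using eig[OF i l] eig[OF j m] eq unfolding spectrum_def by auto
  moreover have "spectrum (L i) \<inter> spectrum (L j) = {}" using spec i j ij by auto
  ultimately show False by auto
qed


abbreviation "DM \<equiv> Dmat d L C V lam"

lemma Dmat_ii: "1 \<le> i \<Longrightarrow> DM i i = 1\<^sub>m (d i)" by (cases i) auto

lemma Dmat_off: "1 \<le> i \<Longrightarrow> j \<noteq> i \<Longrightarrow> DM i j = minv (L i) * V i *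
   mat (d i) (d j) (\<lambda>(l,m). (minv (V i) * C i * DM (i-1) j * V j) $$ (l,m) * inverse (1 - lam j m / lam i l)) * minv (V j)"
  by (cases i) (auto simp: Let_def)

lemma Dmat_carrier: assumes "1 \<le> j" "j \<le> i" "i \<le> n" shows "DM i j \<in> carrier_mat (d i) (d j)"
proof (cases "j = i")
  case True then show ?thesis using assms Dmat_ii by auto
next
  case False
  have "minv (L i) \<in> carrier_mat (d i) (d i)" "V i \<in> carrier_mat (d i) (d i)" "minv (V j) \<in> carrier_mat (d j) (d j)"
    using Li Vc Vi assms by auto
  then show ?thesis using Dmat_off[OF _ False] assms
    by (auto intro!: mult_carrier_mat)
qed

lemma sylv:
  assumes i: "2 \<le> i" "i \<le> n" and j: "1 \<le> j" "j < i"
  shows "L i * DM i j = DM i j * L j + C i * DM (i-1) j"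
proof -
  have i1: "1 \<le> i" using i by auto
  have j1: "j \<le> n" using i j by auto
  define Di' where "Di' = DM (i-1) j"
  define Wi where "Wi = minv (V i)"
  define M where "M = Wi * C i * Di' * V j"
  define Ct where "Ct = mat (d i) (d j) (\<lambda>(l,m). M $$ (l,m) * inverse (1 - lam j m / lam i l))"
  define Ai where "Ai = minv (L i)"
  define Wj where "Wj = minv (V j)"
  define Lii where "Lii = Lam d (\<lambda>a b. inverse (lam a b)) i"
  define G where "G = Lii * Ct"
  have Dij: "DM i j = Ai * V i * Ct * Wj" unfolding Ai_def Wj_def Ct_def M_def Di'_def Wi_def
    using Dmat_off[OF i1] j by auto
  have c1: "Di' \<in> carrier_mat (d (i-1)) (d j)" unfolding Di'_def using Dmat_carrier i j by auto
  have c2: "Ai \<in> carrier_mat (d i) (d i)" "Wi \<in> carrier_mat (d i) (d i)" "Wj \<in> carrier_mat (d j) (d j)"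
    "V i \<in> carrier_mat (d i) (d i)" "V j \<in> carrier_mat (d j) (d j)"
    "L i \<in> carrier_mat (d i) (d i)" "L j \<in> carrier_mat (d j) (d j)"
    "C i \<in> carrier_mat (d i) (d (i-1))"
    "Lam d lam i \<in> carrier_mat (d i) (d i)" "Lam d lam j \<in> carrier_mat (d j) (d j)"
    "Lii \<in> carrier_mat (d i) (d i)" "Ct \<in> carrier_mat (d i) (d j)"
    unfolding Ai_def Wi_def Wj_def Lii_def Ct_def using Li Vi Vc Lc Cc Lam_carrier i j j1 i1 by auto
  have c3: "M \<in> carrier_mat (d i) (d j)" "G \<in> carrier_mat (d i) (d j)"
    unfolding M_def G_def using c1 c2 by auto
  note cs = c1 c2 c3
  note ds = cs[THEN carrier_matD(1)] cs[THEN carrier_matD(2)]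
  have inv: "Ai * L i = 1\<^sub>m (d i)" "L i * Ai = 1\<^sub>m (d i)" "Wi * V i = 1\<^sub>m (d i)" "V i * Wi = 1\<^sub>m (d i)"
     "Wj * V j = 1\<^sub>m (d j)" "V j * Wj = 1\<^sub>m (d j)"
    unfolding Ai_def Wi_def Wj_def using Li Vi i1 i j j1 by auto
  have dgi: "L i * V i = V i * Lam d lam i" and dgj: "L j * V j = V j * Lam d lam j"
    using diag' i1 i j j1 by auto
  have F1: "Lam d lam i * Lii = 1\<^sub>m (d i)"
  proof (rule eq_matI)
    fix l m assume lm: "l < dim_row (1\<^sub>m (d i))" "m < dim_col (1\<^sub>m (d i))"
    then show "(Lam d lam i * Lii) $$ (l, m) = 1\<^sub>m (d i) $$ (l, m)"
      using Lam_mult_left[where d=d and i=i, OF c2(11)] lam_nz[OF i1 i(2)] by (auto simp: Lii_def Lam_def)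
  qed (use cs in auto)
  note invA = mult_inv_assoc[OF inv(1)] mult_inv_assoc[OF inv(2)] mult_inv_assoc[OF inv(3)]
     mult_inv_assoc[OF inv(4)] mult_inv_assoc[OF inv(5)] mult_inv_assoc[OF inv(6)]
  note dgA = mult_eq_assoc[OF dgi] mult_eq_assoc[OF dgj]
  have F1A: "Lam d lam i * (Lii * X) = X" if "dim_row X = d i" for X
    using mult_inv_assoc[OF F1] that ds by simp
  have F2: "Ai * V i = V i * Lii"
  proof -
    have "Ai * V i = Ai * V i * (Lam d lam i * Lii)" using F1 cs by simp
    also have "\<dots> = Ai * (L i * (V i * Lii))" using ds by (simp add: assoc' dgA)
    also have "\<dots> = V i * Lii" using ds by (simp add: invA)
    finally show ?thesis .
  qed
  have F2A: "Ai * (V i * X) = V i * (Lii * X)" if "dim_row X = d i" for X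
    using mult_eq_assoc[OF F2] that ds by simp
  have F3: "Wj * L j = Lam d lam j * Wj"
  proof -
    have "Wj * L j = Wj * L j * (V j * Wj)" using inv cs by simp
    also have "\<dots> = Wj * (V j * (Lam d lam j * Wj))" using ds by (simp add: assoc' dgA)
    also have "\<dots> = Lam d lam j * Wj" using ds by (simp add: invA)
    finally show ?thesis .
  qed
  have F3A: "Wj * (L j * X) = Lam d lam j * (Wj * X)" if "dim_row X = d j" for X
    using mult_eq_assoc[OF F3] that ds by simp
  have DG: "DM i j = V i * G * Wj"
    unfolding Dij G_def using ds by (simp add: assoc' F2A)
  have E1: "L i * DM i j = V i * (Lam d lam i * G) * Wj"
    unfolding DG using ds by (simp add: assoc' dgA)
  have E2: "DM i j * L j = V i * (G * Lam d lam j) * Wj"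
    unfolding DG using ds by (simp add: assoc' F3A F3)
  have E3: "C i * Di' = V i * M * Wj"
    unfolding M_def using ds by (simp add: assoc' invA inv)
  have K: "Lam d lam i * G = G * Lam d lam j + M"
  proof (rule eq_matI)
    fix l m assume lm: "l < dim_row (G * Lam d lam j + M)" "m < dim_col (G * Lam d lam j + M)"
    then have l: "l < d i" and m: "m < d j" using cs by auto
    have a: "lam i l \<noteq> 0" using lam_nz i1 i l by auto
    have ab: "lam i l \<noteq> lam j m" using lam_ne[of i l j m] i1 i j j1 l m by auto
    have ab': "1 - lam j m / lam i l \<noteq> 0" using a ab by (auto simp: field_simps)
    have g: "G $$ (l, m) = inverse (lam i l) * Ct $$ (l, m)"
      unfolding G_def Lii_def using Lam_mult_left[where d=d and i=i, OF c2(12) l m] .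
    have ct: "Ct $$ (l, m) = M $$ (l, m) * inverse (1 - lam j m / lam i l)"
      unfolding Ct_def using l m by simp
    have k1: "(Lam d lam i * G) $$ (l, m) = lam i l * (inverse (lam i l) * (M $$ (l, m) * inverse (1 - lam j m / lam i l)))"
      using Lam_mult_left[where d=d and i=i, OF c3(2) l m] unfolding g ct .
    have k2: "(G * Lam d lam j + M) $$ (l, m) = G $$ (l, m) * lam j m + M $$ (l, m)"
      using Lam_mult_right[where d=d and i=j, OF c3(2) l m] l m cs by simp
    show "(Lam d lam i * G) $$ (l, m) = (G * Lam d lam j + M) $$ (l, m)"
      unfolding k1 k2 g ct using scal[OF a ab] .
  qed (use cs in auto)
  have "DM i j * L j + C i * DM (i-1) j = V i * (G * Lam d lam j) * Wj + V i * M * Wj"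
    using E2 E3 unfolding Di'_def by simp
  also have "\<dots> = V i * (G * Lam d lam j + M) * Wj"
  proof -
    have d1: "V i * (G * Lam d lam j + M) = V i * (G * Lam d lam j) + V i * M"
      by (rule mult_add_distrib_mat[of _ "d i" "d i" _ "d j"]) (use cs in auto)
    have d2: "(V i * (G * Lam d lam j) + V i * M) * Wj = V i * (G * Lam d lam j) * Wj + V i * M * Wj"
      by (rule add_mult_distrib_mat[of _ "d i" "d j" _ _ "d j"]) (use cs in auto)
    show ?thesis by (simp only: d1 d2)
  qed
  also have "\<dots> = L i * DM i j" unfolding E1 K ..
  finally show ?thesis by simp
qed


abbreviation "PT \<equiv> pert d L C V lam"

lemma pert_carrier:
  assumes x: "\<forall>k\<in>{1..n}. x k \<in> carrier_vec (d k)"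
  shows "1 \<le> i \<Longrightarrow> i \<le> n \<Longrightarrow> PT i x \<in> carrier_vec (d i)"
proof (induct i rule: less_induct)
  case (less i)
  show ?case
  proof (cases "i \<le> 1")
    case True
    then have i1: "i = 1" using less by auto
    then have "x 1 \<in> carrier_vec (d 1)" using x less.prems by auto
    then show ?thesis using i1 by (subst pert.simps) auto
  next
    case False
    have "vsum (d i) (\<lambda>j. ((-1) ^ (i - 1 - j)) \<cdot>\<^sub>v (DM i j *\<^sub>v PT j x)) [1..<i] \<in> carrier_vec (d i)"
    proof (rule vsum_carrier)
      fix j assume "j \<in> set [1..<i]"
      then have j: "1 \<le> j" "j < i" by auto
      have "DM i j \<in> carrier_mat (d i) (d j)" using Dmat_carrier j less by auto
      moreover have "PT j x \<in> carrier_vec (d j)" using less j by auto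
      ultimately show "((-1) ^ (i - 1 - j)) \<cdot>\<^sub>v (DM i j *\<^sub>v PT j x) \<in> carrier_vec (d i)" by simp
    qed
    then show ?thesis using False x less by (subst pert.simps) auto
  qed
qed

definition TT :: "(nat \<Rightarrow> complex vec) \<Rightarrow> nat \<Rightarrow> nat \<Rightarrow> nat \<Rightarrow> complex vec" where
  "TT x t i j = ((-1) ^ (i - j)) \<cdot>\<^sub>v (DM i j *\<^sub>v ((L j ^\<^sub>m t) *\<^sub>v PT j x))"

lemma TT_carrier:
  assumes x: "\<forall>k\<in>{1..n}. x k \<in> carrier_vec (d k)" and "1 \<le> j" "j \<le> i" "i \<le> n"
  shows "TT x t i j \<in> carrier_vec (d i)"
proof -
  have "DM i j \<in> carrier_mat (d i) (d j)" using Dmat_carrier assms by auto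
  moreover have "PT j x \<in> carrier_vec (d j)" using pert_carrier[OF x] assms by auto
  moreover have "L j ^\<^sub>m t \<in> carrier_mat (d j) (d j)" using Lc assms by auto
  ultimately show ?thesis unfolding TT_def by simp
qed

lemma TT_ii:
  assumes x: "\<forall>k\<in>{1..n}. x k \<in> carrier_vec (d k)" and "1 \<le> i" "i \<le> n"
  shows "TT x t i i = (L i ^\<^sub>m t) *\<^sub>v PT i x"
proof -
  have "PT i x \<in> carrier_vec (d i)" using pert_carrier[OF x] assms by auto
  moreover have "L i ^\<^sub>m t \<in> carrier_mat (d i) (d i)" using Lc assms by auto
  ultimately show ?thesis unfolding TT_def using Dmat_ii assms by simp
qed

lemma F_split:
  assumes x: "\<forall>k\<in>{1..n}. x k \<in> carrier_vec (d k)" and i: "1 \<le> i" "i \<le> n"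
  shows "vsum (d i) (TT x t i) [1..<i+1] = vsum (d i) (TT x t i) [1..<i] + (L i ^\<^sub>m t) *\<^sub>v PT i x"
proof -
  have e: "[1..<i+1] = [1..<i] @ [i]" using i by simp
  have c: "\<And>j. j \<in> set ([1..<i] @ [i]) \<Longrightarrow> TT x t i j \<in> carrier_vec (d i)" using TT_carrier[OF x] i by auto
  have "vsum (d i) (TT x t i) ([1..<i] @ [i]) = vsum (d i) (TT x t i) [1..<i] + TT x t i i" by (rule vsum_snoc[OF c])
  then show ?thesis unfolding e using TT_ii[OF x i] by simp
qed

lemma pow_suc_vec: "(A :: complex mat) \<in> carrier_mat k k \<Longrightarrow> v \<in> carrier_vec k \<Longrightarrow> A *\<^sub>v ((A ^\<^sub>m t) *\<^sub>v v) = (A ^\<^sub>m Suc t) *\<^sub>v v"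
proof -
  assume A: "A \<in> carrier_mat k k" and v: "v \<in> carrier_vec k"
  have dA: "dim_col A = k" "dim_row A = k" "dim_vec v = k" using A v by auto
  have dP: "dim_row (A ^\<^sub>m t) = k" "dim_col (A ^\<^sub>m t) = k" using A by auto
  have "(A * A ^\<^sub>m t) *\<^sub>v v = A *\<^sub>v ((A ^\<^sub>m t) *\<^sub>v v)" by (rule assoc_v') (use dA dP in auto)
  then have "A *\<^sub>v ((A ^\<^sub>m t) *\<^sub>v v) = (A * A ^\<^sub>m t) *\<^sub>v v" by simp
  also have "\<dots> = (A ^\<^sub>m Suc t) *\<^sub>v v" using pow_mat_comm[OF A] by simp
  finally show ?thesis .
qed

lemma base:
  assumes x: "\<forall>k\<in>{1..n}. x k \<in> carrier_vec (d k)" and i: "1 \<le> i" "i \<le> n"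
  shows "x i = vsum (d i) (TT x 0 i) [1..<i+1]"
proof (cases "i = 1")
  case True
  have p1: "PT 1 x = x 1" by (subst pert.simps) auto
  have x1: "x 1 \<in> carrier_vec (d 1)" using x i True by auto
  have L1: "L 1 ^\<^sub>m 0 = 1\<^sub>m (d 1)" using Lc[of 1] i True by auto
  have "vsum (d 1) (TT x 0 1) [1..<1+1] = TT x 0 1 1 + 0\<^sub>v (d 1)" by simp
  also have "TT x 0 1 1 = x 1" using TT_ii[OF x, of 1 0] i True L1 p1 x1 by simp
  finally show ?thesis using True x1 by simp
next
  case False
  then have i2: "2 \<le> i" using i by auto
  define P where "P j = ((-1) ^ (i - 1 - j)) \<cdot>\<^sub>v (DM i j *\<^sub>v PT j x)" for j
  have pe: "PT i x = x i + vsum (d i) P [1..<i]" unfolding P_def using i2 by (subst pert.simps) auto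
  have xi: "x i \<in> carrier_vec (d i)" using x i by auto
  have Pc: "P j \<in> carrier_vec (d i)" if "j \<in> set [1..<i]" for j
  proof -
    have "DM i j \<in> carrier_mat (d i) (d j)" using Dmat_carrier that i by auto
    moreover have "PT j x \<in> carrier_vec (d j)" using pert_carrier[OF x] that i by auto
    ultimately show ?thesis unfolding P_def by simp
  qed
  have Tc: "TT x 0 i j \<in> carrier_vec (d i)" if "j \<in> set [1..<i]" for j
    using TT_carrier[OF x] that i by auto
  have z: "TT x 0 i j + P j = 0\<^sub>v (d i)" if "j \<in> set [1..<i]" for j
  proof -
    have j: "1 \<le> j" "j < i" using that by auto
    obtain k where k: "i - j = Suc k" "i - 1 - j = k" using j by (metis Suc_diff_Suc diff_Suc_1 diff_commute less_imp_Suc_add add_diff_cancel_left' )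
    have pc: "PT j x \<in> carrier_vec (d j)" using pert_carrier[OF x] j i by auto
    have Lj: "L j ^\<^sub>m 0 = 1\<^sub>m (d j)" using Lc[of j] j i by auto
    have Dc: "DM i j \<in> carrier_mat (d i) (d j)" using Dmat_carrier[of j i] j i by auto
    have w: "DM i j *\<^sub>v PT j x \<in> carrier_vec (d i)" using Dc pc by auto
    have e1: "1\<^sub>m (d j) *\<^sub>v PT j x = PT j x" using pc by simp
    have "(-1::complex) ^ Suc k \<cdot>\<^sub>v (DM i j *\<^sub>v PT j x) + (-1) ^ k \<cdot>\<^sub>v (DM i j *\<^sub>v PT j x) = 0\<^sub>v (d i)"
    proof (rule eq_vecI)
      have dr: "dim_row (DM i j) = d i" using Dc by auto
      fix ia assume "ia < dim_vec (0\<^sub>v (d i) :: complex vec)"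
      then have ia: "ia < d i" by simp
      show "((-1::complex) ^ Suc k \<cdot>\<^sub>v (DM i j *\<^sub>v PT j x) + (-1) ^ k \<cdot>\<^sub>v (DM i j *\<^sub>v PT j x)) $ ia = 0\<^sub>v (d i) $ ia"
        using ia dr by simp
    qed (use Dc in auto)
    then show ?thesis unfolding TT_def P_def Lj k e1 .
  qed
  have pci: "PT i x \<in> carrier_vec (d i)" using pert_carrier[OF x] i by auto
  have "vsum (d i) (TT x 0 i) [1..<i+1] = vsum (d i) (TT x 0 i) [1..<i] + PT i x"
    using F_split[OF x i, of 0] Lc[of i] i pci by simp
  also have "\<dots> = vsum (d i) (TT x 0 i) [1..<i] + (x i + vsum (d i) P [1..<i])" unfolding pe ..
  also have "\<dots> = x i + (vsum (d i) (TT x 0 i) [1..<i] + vsum (d i) P [1..<i])"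
    by (rule add_lswap[OF vsum_carrier[of "[1..<i]" "TT x 0 i", OF Tc] xi vsum_carrier[of "[1..<i]" P, OF Pc]])
  also have "vsum (d i) (TT x 0 i) [1..<i] + vsum (d i) P [1..<i] = vsum (d i) (\<lambda>j. TT x 0 i j + P j) [1..<i]"
    by (rule vsum_add[OF Tc Pc])
  also have "\<dots> = vsum (d i) (\<lambda>j. 0\<^sub>v (d i)) [1..<i]"
    by (rule vsum_cong) (use z in auto)
  finally show ?thesis using xi vsum_zero by simp
qed


lemma step_term:
  assumes x: "\<forall>k\<in>{1..n}. x k \<in> carrier_vec (d k)" and i: "2 \<le> i" "i \<le> n" and j: "1 \<le> j" "j < i"
  shows "L i *\<^sub>v TT x t i j + C i *\<^sub>v TT x t (i - 1) j = TT x (Suc t) i j"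
proof -
  have i1: "1 \<le> i" and jn: "j \<le> n" using i j by auto
  obtain k where k: "i - j = Suc k" "i - 1 - j = k" using j
    by (metis Suc_diff_Suc diff_Suc_1 diff_commute less_imp_Suc_add add_diff_cancel_left')
  define w where "w = (L j ^\<^sub>m t) *\<^sub>v PT j x"
  have pc: "PT j x \<in> carrier_vec (d j)" using pert_carrier[OF x] j jn by auto
  have wc: "w \<in> carrier_vec (d j)" unfolding w_def by (rule mult_mat_vec_carrier[OF pow_carrier_mat[OF Lc[OF j(1) jn]] pc])
  have D: "DM i j \<in> carrier_mat (d i) (d j)" using Dmat_carrier j i by auto
  have D': "DM (i-1) j \<in> carrier_mat (d (i-1)) (d j)" using Dmat_carrier j i by auto
  have Li': "L i \<in> carrier_mat (d i) (d i)" using Lc i1 i by auto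
  have Lj': "L j \<in> carrier_mat (d j) (d j)" using Lc j jn by auto
  have Ci: "C i \<in> carrier_mat (d i) (d (i-1))" using Cc i by auto
  define a where "a = DM i j *\<^sub>v (L j *\<^sub>v w)"
  define b where "b = C i *\<^sub>v (DM (i-1) j *\<^sub>v w)"
  have ac: "a \<in> carrier_vec (d i)" unfolding a_def using D Lj' wc by simp
  have bc: "b \<in> carrier_vec (d i)" unfolding b_def using D' Ci wc by simp
  have e1: "L i *\<^sub>v TT x t i j = (-1) ^ Suc k \<cdot>\<^sub>v (a + b)"
  proof -
    have "L i *\<^sub>v TT x t i j = (-1) ^ Suc k \<cdot>\<^sub>v (L i *\<^sub>v (DM i j *\<^sub>v w))"
      unfolding TT_def k(1) w_def[symmetric] using Li' D wc by (simp add: mult_mat_vec)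
    also have "L i *\<^sub>v (DM i j *\<^sub>v w) = (L i * DM i j) *\<^sub>v w" using Li' D wc by simp
    also have "\<dots> = (DM i j * L j + C i * DM (i-1) j) *\<^sub>v w" using sylv[OF i j] by simp
    also have "\<dots> = a + b" unfolding a_def b_def using D Lj' Ci D' wc
      by (simp add: add_mult_distrib_mat_vec[of _ "d i" "d j"] assoc_v')
    finally show ?thesis .
  qed
  have e2: "C i *\<^sub>v TT x t (i - 1) j = (-1) ^ k \<cdot>\<^sub>v b"
    unfolding TT_def k(2) w_def[symmetric] b_def using Ci D' wc by (simp add: mult_mat_vec)
  have e3: "TT x (Suc t) i j = (-1) ^ Suc k \<cdot>\<^sub>v a"
  proof -
    have "L j ^\<^sub>m Suc t *\<^sub>v PT j x = L j *\<^sub>v w" unfolding w_def using pow_suc_vec[OF Lj' pc] by simp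
    then show ?thesis unfolding TT_def k(1) a_def by simp
  qed
  show ?thesis unfolding e1 e2 e3
  proof (rule eq_vecI)
    fix ia assume "ia < dim_vec ((-1::complex) ^ Suc k \<cdot>\<^sub>v a)"
    then have ia: "ia < d i" using ac by simp
    have da: "dim_vec a = d i" and db: "dim_vec b = d i" using ac bc by auto
    show "((-1::complex) ^ Suc k \<cdot>\<^sub>v (a + b) + (-1) ^ k \<cdot>\<^sub>v b) $ ia = ((-1) ^ Suc k \<cdot>\<^sub>v a) $ ia"
      using ia da db by (simp add: algebra_simps)
  qed (use ac bc in auto)
qed

lemma main:
  assumes x: "\<forall>k\<in>{1..n}. x k \<in> carrier_vec (d k)"
  shows "\<forall>i\<in>{1..n}. (Lin n L C ^^ t) x i = vsum (d i) (TT x t i) [1..<i+1]"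
proof (induct t)
  case 0
  show ?case using base[OF x] by auto
next
  case (Suc t)
  define y where "y = (Lin n L C ^^ t) x"
  have IH: "y i = vsum (d i) (TT x t i) [1..<i+1]" if "1 \<le> i" "i \<le> n" for i
    using Suc that unfolding y_def by auto
  show ?case
  proof (intro ballI)
    fix i assume "i \<in> {1..n}"
    then have i: "1 \<le> i" "i \<le> n" by auto
    have yS: "(Lin n L C ^^ Suc t) x = Lin n L C y" unfolding y_def by simp
    have pc: "PT i x \<in> carrier_vec (d i)" using pert_carrier[OF x] i by auto
    have Li': "L i \<in> carrier_mat (d i) (d i)" using Lc i by auto
    show "(Lin n L C ^^ Suc t) x i = vsum (d i) (TT x (Suc t) i) [1..<i+1]"
    proof (cases "i = 1")
      case True
      have h0: "(Lin n L C ^^ Suc t) x i = L 1 *\<^sub>v y 1" unfolding yS Lin_def True by simp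
      have Li1: "L 1 \<in> carrier_mat (d 1) (d 1)" and pc1: "PT 1 x \<in> carrier_vec (d 1)" using Li' pc True by auto
      have X1: "(L 1 ^\<^sub>m t) *\<^sub>v PT 1 x \<in> carrier_vec (d 1)"
        by (rule mult_mat_vec_carrier[OF pow_carrier_mat[OF Li1] pc1])
      have X2: "(L 1 ^\<^sub>m Suc t) *\<^sub>v PT 1 x \<in> carrier_vec (d 1)"
        by (rule mult_mat_vec_carrier[OF pow_carrier_mat[OF Li1] pc1])
      have "y 1 = 0\<^sub>v (d 1) + (L 1 ^\<^sub>m t) *\<^sub>v PT 1 x" using IH[of 1] F_split[OF x, of 1 t] i by simp
      then have "y 1 = (L 1 ^\<^sub>m t) *\<^sub>v PT 1 x" using X1 by simp
      then have "L 1 *\<^sub>v y 1 = L 1 *\<^sub>v ((L 1 ^\<^sub>m t) *\<^sub>v PT 1 x)" by simp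
      also have "\<dots> = (L 1 ^\<^sub>m Suc t) *\<^sub>v PT 1 x" using pow_suc_vec Li' pc True by simp
      also have "\<dots> = 0\<^sub>v (d 1) + (L 1 ^\<^sub>m Suc t) *\<^sub>v PT 1 x" using X2 by simp
      also have "\<dots> = vsum (d 1) (TT x (Suc t) 1) [1..<1+1]" using F_split[OF x, of 1 "Suc t"] i by simp
      finally show ?thesis using h0 True by simp
    next
      case False
      then have i2: "2 \<le> i" using i by auto
      have Ci: "C i \<in> carrier_mat (d i) (d (i-1))" using Cc i2 i by auto
      have Tc: "TT x t i j \<in> carrier_vec (d i)" if "j \<in> set [1..<i]" for j
        using TT_carrier[OF x] that i by auto
      have Tc': "TT x t (i-1) j \<in> carrier_vec (d (i-1))" if "j \<in> set [1..<i]" for j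
        using TT_carrier[OF x] that i by auto
      define S where "S = vsum (d i) (TT x t i) [1..<i]"
      define S' where "S' = vsum (d (i-1)) (TT x t (i-1)) [1..<i]"
      define X where "X = (L i ^\<^sub>m t) *\<^sub>v PT i x"
      have Sc: "S \<in> carrier_vec (d i)" unfolding S_def using vsum_carrier Tc by blast
      have S'c: "S' \<in> carrier_vec (d (i-1))" unfolding S'_def using vsum_carrier Tc' by blast
      have Xc: "X \<in> carrier_vec (d i)" unfolding X_def by (rule mult_mat_vec_carrier[OF pow_carrier_mat[OF Li'] pc])
      have yi: "y i = S + X" unfolding S_def X_def using IH[OF i] F_split[OF x i] by simp
      have yi1: "y (i-1) = S'" unfolding S'_def using IH[of "i-1"] i2 i by simp
      have "(Lin n L C ^^ Suc t) x i = L i *\<^sub>v y i + C i *\<^sub>v y (i - 1)"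
        unfolding yS Lin_def using False i2 i by simp
      also have "\<dots> = (L i *\<^sub>v S + C i *\<^sub>v S') + L i *\<^sub>v X"
      proof -
        have m1: "L i *\<^sub>v (S + X) = L i *\<^sub>v S + L i *\<^sub>v X" by (rule mult_add_distrib_mat_vec[OF Li' Sc Xc])
        have c1: "L i *\<^sub>v S \<in> carrier_vec (d i)" by (rule mult_mat_vec_carrier[OF Li' Sc])
        have c2: "L i *\<^sub>v X \<in> carrier_vec (d i)" by (rule mult_mat_vec_carrier[OF Li' Xc])
        have c3: "C i *\<^sub>v S' \<in> carrier_vec (d i)" by (rule mult_mat_vec_carrier[OF Ci S'c])
        show ?thesis unfolding yi yi1 m1 by (rule add3_swap[OF c1 c2 c3])
      qed
      also have "L i *\<^sub>v S + C i *\<^sub>v S' = vsum (d i) (\<lambda>j. L i *\<^sub>v TT x t i j + C i *\<^sub>v TT x t (i-1) j) [1..<i]"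
      proof -
        have v1: "L i *\<^sub>v S = vsum (d i) (\<lambda>j. L i *\<^sub>v TT x t i j) [1..<i]" unfolding S_def by (rule vsum_mult[OF Li' Tc])
        have v2: "C i *\<^sub>v S' = vsum (d i) (\<lambda>j. C i *\<^sub>v TT x t (i-1) j) [1..<i]" unfolding S'_def by (rule vsum_mult[OF Ci Tc'])
        have k1: "\<And>j. j \<in> set [1..<i] \<Longrightarrow> L i *\<^sub>v TT x t i j \<in> carrier_vec (d i)"
          by (rule mult_mat_vec_carrier[OF Li' Tc])
        have k2: "\<And>j. j \<in> set [1..<i] \<Longrightarrow> C i *\<^sub>v TT x t (i-1) j \<in> carrier_vec (d i)"
          by (rule mult_mat_vec_carrier[OF Ci Tc'])
        show ?thesis unfolding v1 v2 by (rule vsum_add[OF k1 k2])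
      qed
      also have "\<dots> = vsum (d i) (TT x (Suc t) i) [1..<i]"
        by (rule vsum_cong) (use step_term[OF x i2 i(2)] in auto)
      also have "L i *\<^sub>v X = (L i ^\<^sub>m Suc t) *\<^sub>v PT i x" unfolding X_def using pow_suc_vec[OF Li' pc] .
      also have "vsum (d i) (TT x (Suc t) i) [1..<i] + (L i ^\<^sub>m Suc t) *\<^sub>v PT i x = vsum (d i) (TT x (Suc t) i) [1..<i+1]"
        using F_split[OF x i, of "Suc t"] by simp
      finally show ?thesis .
    qed
  qed
qed

end

theorem lemma3:
  fixes n :: nat and d :: "nat \<Rightarrow> nat" and N :: "nat \<Rightarrow> complex vec \<Rightarrow> real"
    and L C V :: "nat \<Rightarrow> complex mat" and lam :: "nat \<Rightarrow> nat \<Rightarrow> complex"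
  assumes n2: "n \<ge> 2"
    and d_pos: "\<forall>i \<in> {1..n}. d i \<ge> 1"
    and norms: "\<forall>i \<in> {1..n}. is_norm_on (d i) (N i)"
    and L_dim: "\<forall>i \<in> {1..n}. L i \<in> carrier_mat (d i) (d i)"
    and C_dim: "\<forall>i \<in> {2..n}. C i \<in> carrier_mat (d i) (d (i - 1))"
    and V_dim: "\<forall>i \<in> {1..n}. V i \<in> carrier_mat (d i) (d i)"
    and L_inv: "\<forall>i \<in> {1..n}. invertible_mat (L i)"
    and V_inv: "\<forall>i \<in> {1..n}. invertible_mat (V i)"
    and diag: "\<forall>i \<in> {1..n}. L i * V i = V i * Lam d lam i"
    and spec: "\<forall>i \<in> {1..n}. \<forall>j \<in> {1..n}. i \<noteq> j \<longrightarrow> spectrum (L i) \<inter> spectrum (L j) = {}"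
    and norm_incr: "\<forall>i \<in> {1..<n}. opnorm (d i) (N i) (L i) < opnorm (d (i + 1)) (N (i + 1)) (L (i + 1))"
    and norm_le1: "opnorm (d n) (N n) (L n) \<le> 1"
    and i_rng: "i \<in> {2..n}"
    and x_dim: "\<forall>k \<in> {1..n}. x k \<in> carrier_vec (d k)"
  shows "Proj i ((Lin n L C ^^ t) x) =
         vsum (d i) (\<lambda>j. ((-1) ^ (i - j)) \<cdot>\<^sub>v (Dmat d L C V lam i j *\<^sub>v ((L j ^\<^sub>m t) *\<^sub>v pert d L C V lam j x))) [1..<i+1]"
proof -
  interpret lsys n d L C V lam
    using L_dim C_dim V_dim L_inv V_inv diag spec by unfold_locales
  have "i \<in> {1..n}" using i_rng by auto
  then show ?thesis using main[OF x_dim, of t] unfolding Proj_def TT_def by auto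
qed

end
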